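(* Let $K$ be a fractal gasket generated by $\{\varphi_j(z)=r_j(z+d_j)\}_{j=1}^N$, let $r_*=\min_j r_j$, $r^*=\max_j r_j$, $s=\sqrt{\log r^*/\log r_*}$ and $\xi=(r_* )^s$. Then the map $[\mathbf x]\mapsto\pi(\mathbf x)$ from $(\mathcal A_{M_K},\tilde\rho_{M_K,\xi})$ to $K$ (with the Euclidean metric) is a bi-Hölder map with index $s$: it is a bijection and there is $C>0$ with $C^{-1}\tilde\rho_{M_K,\xi}(a,b)^{1/s}\le|\pi(a)-\pi(b)|\le C\,\tilde\rho_{M_K,\xi}(a,b)^s$ for all $a,b\in\mathcal A_{M_K}$.
   Context: Let $\Delta\subset\mathbb R^2$ be the triangle with vertices $\omega_\alpha=(0,0)$, $\omega_\beta=(1,0)$, $\omega_\gamma=(1/2,\sqrt3/2)$. A fractal gasket is the attractor $K$ (nonempty compact with $K=\bigcup_j\varphi_j(K)$) of $\{\varphi_j(z)=r_j(z+d_j)\}_{j=1}^N$, $r_j\in(0,1)$, $d_j\in\mathbb R^2$, such that $\bigcup_j\varphi_j(\Delta)\subset\Delta$ and for $i\ne j$, $\varphi_i(\Delta)\cap\varphi_j(\Delta)$ consists only of common vertices. Let $\Sigma=\{1,\dots,N\}$. Set $\alpha=-1$ if $(0,0)\notin K$, otherwise $\alpha$ is the index with $\varphi_\alpha((0,0))=(0,0)$; similarly $\beta=-2$ or $\varphi_\beta$ fixes $(1,0)$; $\gamma=-3$ or $\varphi_\gamma$ fixes $\omega_\gamma$. The coding map $\pi:\Sigma^\infty\to K$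 is $\{\pi(\mathbf x)\}=\bigcap_{i\ge1}\varphi_{x_1}\circ\cdots\circ\varphi_{x_i}(K)$. $\Sigma$-automaton, itinerary, surviving time: a $\Sigma$-automaton has states $Q_0\cup\{Id,Exit\}$, input alphabet $\Sigma^2$, initial state $Id$, transition $\delta$ with $\delta(Id,(i,j))=Id$ iff $i=j$; itinerary $S_0=Id$, $S_k=\delta(S_{k-1},(x_k,y_k))$ stopped at $Exit$; $T_M(\mathbf x,\mathbf y)$ = largest $k$ with $S_k\ne Exit$ (possibly $\infty$); $\rho_{M,\xi}=\xi^{T_M}$ ($\xi^\infty=0$). Triangle automaton: states $S_{uv}$ ($u\neq v\in\{\alpha,\beta,\gamma\}$) plus $Id,Exit$; $\delta(Id,(i,j))=S_{uv}\Rightarrow\delta(Id,(j,i))=S_{vu}$; $\delta(S_{uv},(i,j))=S_{uv}$ if $(i,j)=(v,u)$, else $Exit$. The topology automaton $M_K$ is the triangle automaton with, for $i\neq j$: $\delta(Id,(i,j))=S_{uv}$ if $u,v\in\Sigma$ and $\varphi_i(\omega_v)=\varphi_j(\omega_u)$, and $\delta(Id,(i,j))=Exit$ if $\varphi_i(K)\cap\varphi_j(K)=\emptyset$. With $\mathbf x\sim\mathbf y$ iff $\rho_{M_K,\xi}(\mathbf x,\mathbf y)=0$, $\mathcal A_{M_K}=\Sigma^\infty/\sim$ and $\tilde\rho_{M_K,\xi}([\mathbf x],[\mathbf y])=\inf\{\rho_{M_K,\xi}(\mathbf a,\mathbf b):\mathbf a\in[\mathbf x],\mathbf b\in[\mathbf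 y]\}$. *)

theory Defs
  imports "HOL-Analysis.Analysis" "HOL-Library.Extended_Nat"
begin

text \<open>Points of the plane are represented as complex numbers.
  Vertices of the triangle are labelled 0 (alpha), 1 (beta), 2 (gamma).\<close>

definition omega :: "nat \<Rightarrow> complex" where
  "omega v = (if v = 0 then 0 else if v = 1 then 1 else Complex (1/2) (sqrt 3 / 2))"

definition triangle :: "complex set" where
  "triangle = convex hull {omega 0, omega 1, omega 2}"

definition phi :: "(nat \<Rightarrow> real) \<Rightarrow> (nat \<Rightarrow> complex) \<Rightarrow> nat \<Rightarrow> complex \<Rightarrow> complex" where
  "phi r d j z = complex_of_real (r j) * (z + d j)"

definition fractal_gasket ::
  "nat \<Rightarrow> (nat \<Rightarrow> real) \<Rightarrow> (nat \<Rightarrow> complex) \<Rightarrow> complex set \<Rightarrow> bool" where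
  "fractal_gasket N r d K \<longleftrightarrow>
     (\<forall>j\<in>{1..N}. 0 < r j \<and> r j < 1) \<and>
     (\<forall>j\<in>{1..N}. phi r d j ` triangle \<subseteq> triangle) \<and>
     (\<forall>i\<in>{1..N}. \<forall>j\<in>{1..N}. i \<noteq> j \<longrightarrow>
        phi r d i ` triangle \<inter> phi r d j ` triangle
          \<subseteq> phi r d i ` {omega 0, omega 1, omega 2} \<inter> phi r d j ` {omega 0, omega 1, omega 2}) \<and>
     compact K \<and> K \<noteq> {} \<and> K = (\<Union>j\<in>{1..N}. phi r d j ` K)"

text \<open>Sigma^infinity: infinite words, 0-indexed (x 0 is the first letter x_1).\<close>
definition words :: "nat \<Rightarrow> (nat \<Rightarrow> nat) set" where
  "words N = {x. \<forall>k. x k \<in> {1..N}}"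

primrec cylmap :: "(nat \<Rightarrow> real) \<Rightarrow> (nat \<Rightarrow> complex) \<Rightarrow> (nat \<Rightarrow> nat) \<Rightarrow> nat \<Rightarrow> complex \<Rightarrow> complex" where
  "cylmap r d x 0 = id"
| "cylmap r d x (Suc n) = cylmap r d x n \<circ> phi r d (x n)"

definition coding :: "(nat \<Rightarrow> real) \<Rightarrow> (nat \<Rightarrow> complex) \<Rightarrow> complex set \<Rightarrow> (nat \<Rightarrow> nat) \<Rightarrow> complex" where
  "coding r d K x = (THE p. (\<Inter>i\<in>{1..}. cylmap r d x i ` K) = {p})"

text \<open>Letters alpha, beta, gamma (as integers): -(v+1) if omega v is not in K,
  otherwise the index j with phi_j(omega v) = omega v.\<close>
definition letter :: "nat \<Rightarrow> (nat \<Rightarrow> real) \<Rightarrow> (nat \<Rightarrow> complex) \<Rightarrow> complex set \<Rightarrow> nat \<Rightarrow> int" where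
  "letter N r d K v = (if omega v \<notin> K then - int (v + 1)
      else int (THE j. j \<in> {1..N} \<and> phi r d j (omega v) = omega v))"

datatype state = Id | S nat nat | Exit
  (* S a b stands for S_{uv} with u = letter of vertex a, v = letter of vertex b *)

definition delta :: "nat \<Rightarrow> (nat \<Rightarrow> real) \<Rightarrow> (nat \<Rightarrow> complex) \<Rightarrow> complex set
    \<Rightarrow> state \<Rightarrow> nat \<times> nat \<Rightarrow> state" where
  "delta N r d K q ij = (case ij of (i, j) \<Rightarrow>
     (case q of
        Id \<Rightarrow>
          (if i = j then Id
           else if (\<exists>a b. a \<in> {0,1,2} \<and> b \<in> {0,1,2} \<and> a \<noteq> b \<and>
                     letter N r d K a \<in> int ` {1..N} \<and> letter N r d K b \<in> int ` {1..N} \<and>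
                     phi r d i (omega b) = phi r d j (omega a))
           then (case (SOME (a, b). a \<in> {0,1,2} \<and> b \<in> {0,1,2} \<and> a \<noteq> b \<and>
                     letter N r d K a \<in> int ` {1..N} \<and> letter N r d K b \<in> int ` {1..N} \<and>
                     phi r d i (omega b) = phi r d j (omega a)) of (a, b) \<Rightarrow> S a b)
           else Exit)
      | S a b \<Rightarrow>
          (if int i = letter N r d K b \<and> int j = letter N r d K a then S a b else Exit)
      | Exit \<Rightarrow> Exit))"

primrec itin :: "nat \<Rightarrow> (nat \<Rightarrow> real) \<Rightarrow> (nat \<Rightarrow> complex) \<Rightarrow> complex set
    \<Rightarrow> (nat \<Rightarrow> nat) \<Rightarrow> (nat \<Rightarrow> nat) \<Rightarrow> nat \<Rightarrow> state" where
  "itin N r d K x y 0 = Id"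
| "itin N r d K x y (Suc k) =
     (if itin N r d K x y k = Exit then Exit else delta N r d K (itin N r d K x y k) (x k, y k))"

definition surv_time :: "nat \<Rightarrow> (nat \<Rightarrow> real) \<Rightarrow> (nat \<Rightarrow> complex) \<Rightarrow> complex set
    \<Rightarrow> (nat \<Rightarrow> nat) \<Rightarrow> (nat \<Rightarrow> nat) \<Rightarrow> enat" where
  "surv_time N r d K x y = Sup (enat ` {k. itin N r d K x y k \<noteq> Exit})"

definition rho :: "nat \<Rightarrow> (nat \<Rightarrow> real) \<Rightarrow> (nat \<Rightarrow> complex) \<Rightarrow> complex set \<Rightarrow> real
    \<Rightarrow> (nat \<Rightarrow> nat) \<Rightarrow> (nat \<Rightarrow> nat) \<Rightarrow> real" where
  "rho N r d K \<xi> x y = (case surv_time N r d K x y of enat n \<Rightarrow> \<xi> ^ n | \<infinity> \<Rightarrow> 0)"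

definition eqclass :: "nat \<Rightarrow> (nat \<Rightarrow> real) \<Rightarrow> (nat \<Rightarrow> complex) \<Rightarrow> complex set \<Rightarrow> real
    \<Rightarrow> (nat \<Rightarrow> nat) \<Rightarrow> (nat \<Rightarrow> nat) set" where
  "eqclass N r d K \<xi> x = {y \<in> words N. rho N r d K \<xi> x y = 0}"

definition quot :: "nat \<Rightarrow> (nat \<Rightarrow> real) \<Rightarrow> (nat \<Rightarrow> complex) \<Rightarrow> complex set \<Rightarrow> real
    \<Rightarrow> (nat \<Rightarrow> nat) set set" where
  "quot N r d K \<xi> = eqclass N r d K \<xi> ` words N"

definition rho_tilde :: "nat \<Rightarrow> (nat \<Rightarrow> real) \<Rightarrow> (nat \<Rightarrow> complex) \<Rightarrow> complex set \<Rightarrow> real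
    \<Rightarrow> (nat \<Rightarrow> nat) set \<Rightarrow> (nat \<Rightarrow> nat) set \<Rightarrow> real" where
  "rho_tilde N r d K \<xi> X Y = Inf {rho N r d K \<xi> a b | a b. a \<in> X \<and> b \<in> Y}"

end

theory Submission
  imports Defs
begin


definition lam :: "nat \<Rightarrow> complex \<Rightarrow> real" where
  "lam v z = (if v = 0 then 1 - Re z - Im z / sqrt 3 else if v = 1 then Re z - Im z / sqrt 3
              else 2 * Im z / sqrt 3)"

definition lin :: "nat \<Rightarrow> complex \<Rightarrow> real" where
  "lin v z = lam v z - lam v 0"

lemma less3: "v < (3::nat) \<Longrightarrow> v = 0 \<or> v = 1 \<or> v = 2" by auto

lemma s3: "sqrt 3 * sqrt 3 = (3::real)" "sqrt 3 > (0::real)" "sqrt 3 \<ge> (1::real)"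
  by auto

lemma lin_diff: "lin v (a - b) = lam v a - lam v b"
  by (auto simp: lin_def lam_def field_simps)

lemma lin_add: "lin v (a + b) = lin v a + lin v b"
  by (auto simp: lin_def lam_def field_simps)

lemma lin_scale: "lin v (of_real t * a) = t * lin v a"
  by (auto simp: lin_def lam_def field_simps)

lemma lin_bound: "\<bar>lin v w\<bar> \<le> 2 * cmod w"
proof -
  have a: "\<bar>Re w\<bar> \<le> cmod w" "\<bar>Im w\<bar> \<le> cmod w" by (auto simp: abs_Re_le_cmod abs_Im_le_cmod)
  have b: "\<bar>Im w / sqrt 3\<bar> \<le> \<bar>Im w\<bar>"
  proof -
    have "\<bar>Im w\<bar> \<le> \<bar>Im w\<bar> * sqrt 3" by (metis abs_ge_zero mult.right_neutral mult_left_mono s3(3))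
    then show ?thesis using s3 by (auto simp: abs_div divide_le_eq)
  qed
  have c: "\<bar>2 * Im w / sqrt 3\<bar> \<le> 2 * \<bar>Im w\<bar>"
  proof -
    have "\<bar>2 * Im w / sqrt 3\<bar> = 2 * \<bar>Im w / sqrt 3\<bar>" by (simp add: abs_mult)
    then show ?thesis using b by linarith
  qed
  have t1: "\<bar>Re w - Im w / sqrt 3\<bar> \<le> \<bar>Re w\<bar> + \<bar>Im w / sqrt 3\<bar>" by (rule abs_triangle_ineq4)
  have t2: "\<bar>- Re w - Im w / sqrt 3\<bar> \<le> \<bar>Re w\<bar> + \<bar>Im w / sqrt 3\<bar>"
    using abs_triangle_ineq4[of "- Re w" "Im w / sqrt 3"] by simp
  show ?thesis using a b c t1 t2 by (auto simp: lin_def lam_def)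
qed

lemma omega2: "omega 2 = Complex (1/2) (sqrt 3 / 2)" by (simp add: omega_def)

lemma lam_omega: "u < 3 \<Longrightarrow> v < 3 \<Longrightarrow> lam v (omega u) = (if u = v then 1 else 0)"
  by (cases "u = 0"; cases "u = 1"; cases "v = 0"; cases "v = 1") (auto simp: lam_def omega_def)

lemma lam_sum: "lam 0 z + lam 1 z + lam 2 z = 1"
  by (auto simp: lam_def field_simps)

lemma lam_repr: "z = of_real (lam 1 z) + of_real (lam 2 z) * omega 2"
  by (auto simp: lam_def omega_def complex_eq_iff field_simps)

lemma triangle_iff: "z \<in> triangle \<longleftrightarrow> lam 0 z \<ge> 0 \<and> lam 1 z \<ge> 0 \<and> lam 2 z \<ge> 0"
proof
  assume "z \<in> triangle"
  then obtain u v w where uvw: "0 \<le> u" "0 \<le> v" "0 \<le> w" "u + v + w = 1"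
    "z = u *\<^sub>R omega 0 + v *\<^sub>R omega 1 + w *\<^sub>R omega 2"
    unfolding triangle_def convex_hull_3 by blast
  then have "lam 0 z = u" "lam 1 z = v" "lam 2 z = w"
    by (auto simp: lam_def omega_def scaleR_conv_of_real field_simps)
  then show "lam 0 z \<ge> 0 \<and> lam 1 z \<ge> 0 \<and> lam 2 z \<ge> 0" using uvw by auto
next
  assume h: "lam 0 z \<ge> 0 \<and> lam 1 z \<ge> 0 \<and> lam 2 z \<ge> 0"
  have "z = lam 0 z *\<^sub>R omega 0 + lam 1 z *\<^sub>R omega 1 + lam 2 z *\<^sub>R omega 2"
    using lam_repr[of z] by (simp add: omega_def scaleR_conv_of_real)
  then show "z \<in> triangle" unfolding triangle_def convex_hull_3 using h lam_sum[of z] by blast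
qed

lemma lam_le1: "z \<in> triangle \<Longrightarrow> v < 3 \<Longrightarrow> lam v z \<le> 1"
  using triangle_iff[of z] lam_sum[of z] less3[of v] by auto

lemma lam_one: assumes "z \<in> triangle" "v < 3" "lam v z = 1" shows "z = omega v"
proof -
  have "\<forall>u<3. lam u z = lam u (omega v)"
  proof (intro allI impI)
    fix u :: nat assume "u < 3"
    then show "lam u z = lam u (omega v)"
      using assms triangle_iff[of z] lam_sum[of z] lam_omega[of v u] less3[of u] less3[of v]
      by auto
  qed
  then have "lam 1 z = lam 1 (omega v)" "lam 2 z = lam 2 (omega v)" by auto
  then show ?thesis using lam_repr[of z] lam_repr[of "omega v"] by metis
qed

lemma omega_tri: "v < 3 \<Longrightarrow> omega v \<in> triangle"
  unfolding triangle_iff using lam_omega[of v] by auto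

lemma tri_convex: "convex triangle" unfolding triangle_def by simp
lemma tri_compact: "compact triangle" unfolding triangle_def by (simp add: compact_convex_hull)

lemma sep:
  assumes "a < 3" "b < 3" "a \<noteq> b" "q1 \<in> triangle" "q2 \<in> triangle" "s1 \<ge> 0" "s2 \<ge> 0"
  shows "s1 * (1 - lam b q1) \<le> 2 * cmod (of_real s1 * (q1 - omega b) - of_real s2 * (q2 - omega a))"
proof -
  let ?w = "of_real s2 * (q2 - omega a) - of_real s1 * (q1 - omega b)"
  have "lin b ?w = s2 * lam b q2 + s1 * (1 - lam b q1)"
    unfolding diff_conv_add_uminus[of "of_real s2 * _"] lin_add
    using assms lam_omega[of a b] lam_omega[of b b]
    by (simp add: lin_scale lin_diff flip: mult_minus_right of_real_minus)
  moreover have "lam b q2 \<ge> 0" using assms triangle_iff[of q2] less3[of b] by auto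
  ultimately have "s1 * (1 - lam b q1) \<le> lin b ?w" using assms by simp
  also have "\<dots> \<le> 2 * cmod ?w" using lin_bound[of b ?w] by simp
  also have "cmod ?w = cmod (of_real s1 * (q1 - omega b) - of_real s2 * (q2 - omega a))"
    by (simp add: norm_minus_commute)
  finally show ?thesis .
qed



lemma ph_diff: "phi r d j z - phi r d j w = of_real (r j) * (z - w)"
  by (simp add: phi_def algebra_simps)

definition rat :: "(nat \<Rightarrow> real) \<Rightarrow> (nat \<Rightarrow> nat) \<Rightarrow> nat \<Rightarrow> real" where
  "rat r x n = (\<Prod>l<n. r (x l))"

lemma cyl_aff: "\<exists>t. \<forall>z. cylmap r d x n z = of_real (rat r x n) * z + t"
proof (induction n)
  case 0 then show ?case by (auto simp: rat_def)
next
  case (Suc n)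
  then obtain t where t: "\<forall>z. cylmap r d x n z = of_real (rat r x n) * z + t" by blast
  show ?case
    by (rule exI[of _ "of_real (rat r x n) * (of_real (r (x n)) * d (x n)) + t"])
       (simp add: t phi_def rat_def algebra_simps)
qed

lemma cyl_diff: "cylmap r d x n z - cylmap r d x n w = of_real (rat r x n) * (z - w)"
  using cyl_aff[of r d x n] by (auto simp: algebra_simps)

lemma cyl_cont: "continuous_on A (cylmap r d x n)"
proof -
  obtain t where t: "\<forall>z. cylmap r d x n z = of_real (rat r x n) * z + t" using cyl_aff by blast
  have "cylmap r d x n = (\<lambda>z. of_real (rat r x n) * z + t)" using t by auto
  then show ?thesis by (simp add: continuous_intros)
qed

lemma cyl_agree: "(\<forall>l<n. x l = y l) \<Longrightarrow> cylmap r d x n = cylmap r d y n"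
  by (induction n) auto

lemma fin_min:
  fixes P :: "'a \<Rightarrow> real \<Rightarrow> bool"
  assumes "finite I" "\<forall>i\<in>I. \<exists>e>0. P i e" "\<And>i e e'. P i e \<Longrightarrow> 0 < e' \<Longrightarrow> e' \<le> e \<Longrightarrow> P i e'"
  shows "\<exists>e>0. \<forall>i\<in>I. P i e"
  using assms(1,2)
proof (induction I rule: finite_induct)
  case empty then show ?case using zero_less_one by blast
next
  case (insert a F)
  then obtain e1 where e1: "e1 > 0" "\<forall>i\<in>F. P i e1" by auto
  from insert obtain e2 where e2: "e2 > 0" "P a e2" by auto
  show ?case
    by (rule exI[of _ "min e1 e2"]) (use e1 e2 assms(3) in auto)
qed

locale gk =
  fixes N :: nat and r :: "nat \<Rightarrow> real" and d :: "nat \<Rightarrow> complex" and K :: "complex set"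
  assumes gasket: "fractal_gasket N r d K"
begin

abbreviation "ph \<equiv> phi r d"
abbreviation "rmn \<equiv> Min (r ` {1..N})"
abbreviation "rmx \<equiv> Max (r ` {1..N})"

lemma gp: "(\<forall>j\<in>{1..N}. 0 < r j \<and> r j < 1) \<and>
     (\<forall>j\<in>{1..N}. ph j ` triangle \<subseteq> triangle) \<and>
     (\<forall>i\<in>{1..N}. \<forall>j\<in>{1..N}. i \<noteq> j \<longrightarrow>
        ph i ` triangle \<inter> ph j ` triangle
          \<subseteq> ph i ` {omega 0, omega 1, omega 2} \<inter> ph j ` {omega 0, omega 1, omega 2}) \<and>
     compact K \<and> K \<noteq> {} \<and> K = (\<Union>j\<in>{1..N}. ph j ` K)"
  using gasket unfolding fractal_gasket_def .

lemmas gparts = conjunct1[OF gp] conjunct1[OF conjunct2[OF gp]] conjunct1[OF conjunct2[OF conjunct2[OF gp]]]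
  conjunct1[OF conjunct2[OF conjunct2[OF conjunct2[OF gp]]]]
  conjunct1[OF conjunct2[OF conjunct2[OF conjunct2[OF conjunct2[OF gp]]]]]
  conjunct2[OF conjunct2[OF conjunct2[OF conjunct2[OF conjunct2[OF gp]]]]]

lemma r_bd: "j \<in> {1..N} \<Longrightarrow> 0 < r j \<and> r j < 1"
  using gparts(1) by blast
lemma ph_tri: "j \<in> {1..N} \<Longrightarrow> ph j ` triangle \<subseteq> triangle"
  using gparts(2) by blast
lemma ph_int: "i \<in> {1..N} \<Longrightarrow> j \<in> {1..N} \<Longrightarrow> i \<noteq> j \<Longrightarrow>
   ph i ` triangle \<inter> ph j ` triangle \<subseteq> ph i ` {omega 0, omega 1, omega 2} \<inter> ph j ` {omega 0, omega 1, omega 2}"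
  using gparts(3) by simp
lemma K_cpt: "compact K" and K_ne: "K \<noteq> {}" and K_eq: "K = (\<Union>j\<in>{1..N}. ph j ` K)"
  using gparts(4-6) by -

lemma N_pos: "N \<ge> 1"
proof (rule ccontr)
  assume "\<not> N \<ge> 1" then have "{1..N} = {}" by auto
  then show False using K_eq K_ne by auto
qed

lemma ph_K: "j \<in> {1..N} \<Longrightarrow> ph j ` K \<subseteq> K"
  using K_eq by blast

lemma ph_inj: "j \<in> {1..N} \<Longrightarrow> ph j z = ph j w \<Longrightarrow> z = w"
  using ph_diff[of r d j z w] r_bd[of j] by auto

lemma rmn_bd: "0 < rmn" "rmx < 1" "j \<in> {1..N} \<Longrightarrow> rmn \<le> r j \<and> r j \<le> rmx" "rmn \<le> rmx"
proof -
  have ne: "r ` {1..N} \<noteq> {}" "finite (r ` {1..N})" using N_pos by auto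
  show "0 < rmn" using ne r_bd by (subst Min_gr_iff) auto
  show "rmx < 1" using ne r_bd by (subst Max_less_iff) auto
  show "j \<in> {1..N} \<Longrightarrow> rmn \<le> r j \<and> r j \<le> rmx" using ne by auto
  have "1 \<in> {1..N}" using N_pos by auto
  then have "rmn \<le> r 1" "r 1 \<le> rmx" using ne by auto
  then show "rmn \<le> rmx" by linarith
qed

lemma words_in: "x \<in> words N \<Longrightarrow> x k \<in> {1..N}"
  by (auto simp: words_def)

lemma rat_bd: assumes "x \<in> words N" shows "rmn ^ n \<le> rat r x n" "rat r x n \<le> rmx ^ n" "0 < rat r x n"
proof -
  have h: "rmn \<le> r (x l) \<and> r (x l) \<le> rmx \<and> 0 \<le> rmn \<and> 0 \<le> r (x l)" for l
  proof -
    have j: "x l \<in> {1..N}" by (rule words_in[OF assms])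
    show ?thesis using rmn_bd(1) rmn_bd(3)[OF j] r_bd[OF j] by simp
  qed
  have "(\<Prod>l<n. rmn) \<le> (\<Prod>l<n. r (x l))" by (rule prod_mono) (use h in blast)
  then show "rmn ^ n \<le> rat r x n" by (simp add: rat_def)
  have "(\<Prod>l<n. r (x l)) \<le> (\<Prod>l<n. rmx)" by (rule prod_mono) (use h in blast)
  then show "rat r x n \<le> rmx ^ n" by (simp add: rat_def)
  have "0 < (\<Prod>l<n. r (x l))" by (rule prod_pos) (use r_bd words_in[OF assms] in blast)
  then show "0 < rat r x n" by (simp add: rat_def)
qed

lemma cyl_K: "x \<in> words N \<Longrightarrow> cylmap r d x n ` K \<subseteq> K"
proof (induction n)
  case (Suc n)
  have "cylmap r d x (Suc n) ` K = cylmap r d x n ` (ph (x n) ` K)" by (auto simp: image_comp)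
  also have "\<dots> \<subseteq> cylmap r d x n ` K" using ph_K[OF words_in[OF Suc.prems]] by auto
  finally show ?case using Suc by auto
qed simp

lemma cyl_dec1: "x \<in> words N \<Longrightarrow> cylmap r d x (Suc n) ` K \<subseteq> cylmap r d x n ` K"
proof -
  assume x: "x \<in> words N"
  have "cylmap r d x (Suc n) ` K = cylmap r d x n ` (ph (x n) ` K)" by (auto simp: image_comp)
  also have "\<dots> \<subseteq> cylmap r d x n ` K" using ph_K[OF words_in[OF x]] by auto
  finally show ?thesis .
qed

lemma cyl_dec: assumes x: "x \<in> words N" and "m \<le> n" shows "cylmap r d x n ` K \<subseteq> cylmap r d x m ` K"
  using assms(2)
proof (induction n rule: dec_induct)
  case (step k) then show ?case using cyl_dec1[OF x, of k] by blast
qed simp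

definition B where "B = (SOME B. B > 0 \<and> (\<forall>p\<in>K. cmod p \<le> B))"

lemma B: "B > 0" "p \<in> K \<Longrightarrow> cmod p \<le> B"
proof -
  have "\<exists>B. B > 0 \<and> (\<forall>p\<in>K. cmod p \<le> B)" using compact_imp_bounded[OF K_cpt] bounded_pos by blast
  from someI_ex[OF this] show "B > 0" "p \<in> K \<Longrightarrow> cmod p \<le> B" unfolding B_def by auto
qed

lemma K_diam: "p \<in> K \<Longrightarrow> q \<in> K \<Longrightarrow> cmod (p - q) \<le> 2 * B"
  using B(2)[of p] B(2)[of q] norm_triangle_ineq4[of p q] by auto

lemma cyl_small: assumes "x \<in> words N" "p \<in> K" "q \<in> K"
  shows "cmod (cylmap r d x n p - cylmap r d x n q) \<le> rmx ^ n * (2 * B)"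
proof -
  have "cmod (cylmap r d x n p - cylmap r d x n q) = rat r x n * cmod (p - q)"
    using abs_of_pos[OF rat_bd(3)[OF assms(1)]] by (simp add: cyl_diff norm_mult)
  also have "\<dots> \<le> rmx ^ n * (2 * B)"
    using rat_bd[OF assms(1), of n] K_diam[OF assms(2,3)] by (intro mult_mono) auto
  finally show ?thesis .
qed

lemma small_pow: "e > 0 \<Longrightarrow> \<exists>n. rmx ^ n * (2 * B) < e"
proof -
  assume e: "e > 0"
  obtain n where "rmx ^ n < e / (2 * B)" using real_arch_pow_inv[of "e / (2*B)" rmx] e B(1) rmn_bd by auto
  then show ?thesis using B(1) by (auto simp: field_simps)
qed

lemma coding: assumes x: "x \<in> words N"
  shows "(\<Inter>i\<in>{1..}. cylmap r d x i ` K) = {coding r d K x}" "coding r d K x \<in> cylmap r d x n ` K"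
proof -
  let ?S = "\<lambda>n. cylmap r d x (Suc n) ` K"
  have "\<exists>a. \<Inter>(range ?S) = {a}"
  proof (rule decreasing_closed_nest_sing)
    fix n show "closed (?S n)"
      by (intro compact_imp_closed compact_continuous_image cyl_cont K_cpt)
    show "?S n \<noteq> {}" using K_ne by auto
  next
    fix m n :: nat assume "m \<le> n" then show "?S n \<subseteq> ?S m" by (intro cyl_dec[OF x]) simp
  next
    fix e :: real assume "e > 0"
    then obtain n where n: "rmx ^ n * (2 * B) < e" using small_pow by blast
    show "\<exists>n. \<forall>p\<in>?S n. \<forall>q\<in>?S n. dist p q < e"
    proof (intro exI ballI)
      fix p q assume "p \<in> ?S n" "q \<in> ?S n"
      then obtain p' q' where pq: "p' \<in> K" "q' \<in> K" "p = cylmap r d x (Suc n) p'" "q = cylmap r d x (Suc n) q'"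
        by blast
      have "dist p q = cmod (cylmap r d x (Suc n) p' - cylmap r d x (Suc n) q')"
        using pq by (simp only: dist_norm)
      also have "\<dots> \<le> rmx ^ Suc n * (2 * B)" by (rule cyl_small[OF x pq(1,2)])
      also have "\<dots> \<le> rmx ^ n * (2 * B)"
        using B(1) rmn_bd power_decreasing[of n "Suc n" rmx] by (intro mult_right_mono) auto
      finally show "dist p q < e" using n by simp
    qed
  qed
  then obtain a where a: "\<Inter>(range ?S) = {a}" by blast
  have eq: "(\<Inter>i\<in>{1..}. cylmap r d x i ` K) = \<Inter>(range ?S)"
  proof -
    have "{1..} = range Suc" by (auto simp: image_iff not0_implies_Suc)
    then show ?thesis by (simp add: image_comp)
  qed
  have c: "coding r d K x = a" unfolding coding_def eq a by simp
  show "(\<Inter>i\<in>{1..}. cylmap r d x i ` K) = {coding r d K x}" using eq a c by simp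
  have "a \<in> ?S n" using a by blast
  then show "coding r d K x \<in> cylmap r d x n ` K" using c cyl_dec1[OF x] by blast
qed

end


context gk begin

lemma K_path: assumes p: "p \<in> K"
  shows "\<exists>x\<in>words N. \<exists>qs. \<forall>n. qs n \<in> K \<and> p = cylmap r d x n (qs n)"
proof -
  define nx where "nx q = (SOME jq. fst jq \<in> {1..N} \<and> snd jq \<in> K \<and> q = ph (fst jq) (snd jq))" for q
  have nx: "fst (nx q) \<in> {1..N} \<and> snd (nx q) \<in> K \<and> q = ph (fst (nx q)) (snd (nx q))" if "q \<in> K" for q
  proof -
    from that K_eq have "\<exists>j\<in>{1..N}. q \<in> ph j ` K" by blast
    then obtain j z where "j \<in> {1..N}" "z \<in> K" "q = ph j z" by blast
    then have "\<exists>jq. fst jq \<in> {1..N} \<and> snd jq \<in> K \<and> q = ph (fst jq) (snd jq)"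
      by (intro exI[of _ "(j, z)"]) simp
    from someI_ex[OF this] show ?thesis unfolding nx_def .
  qed
  define qs where "qs n = ((snd \<circ> nx) ^^ n) p" for n
  define x where "x n = fst (nx (qs n))" for n
  have qsS: "qs (Suc n) = snd (nx (qs n))" for n by (simp add: qs_def)
  have qK: "qs n \<in> K" for n
    by (induction n) (use p nx in \<open>auto simp: qs_def\<close>)
  have xw: "x \<in> words N" using nx qK by (auto simp: words_def x_def)
  have "p = cylmap r d x n (qs n)" for n
  proof (induction n)
    case 0 then show ?case by (simp add: qs_def)
  next
    case (Suc n)
    have "cylmap r d x (Suc n) (qs (Suc n)) = cylmap r d x n (ph (x n) (snd (nx (qs n))))"
      by (simp add: qsS)
    also have "ph (x n) (snd (nx (qs n))) = qs n" using nx[OF qK[of n]] by (simp add: x_def)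
    finally show ?case using Suc by simp
  qed
  then show ?thesis using xw qK by blast
qed

lemma onto: "p \<in> K \<Longrightarrow> \<exists>x\<in>words N. coding r d K x = p"
proof -
  assume "p \<in> K"
  then obtain x qs where x: "x \<in> words N" and h: "\<forall>n. qs n \<in> K \<and> p = cylmap r d x n (qs n)"
    using K_path by blast
  have "p \<in> (\<Inter>i\<in>{1..}. cylmap r d x i ` K)" using h by blast
  then have "p \<in> {coding r d K x}" unfolding coding(1)[OF x] .
  then show ?thesis using x by blast
qed

lemma cyl_tri: "x \<in> words N \<Longrightarrow> cylmap r d x n ` triangle \<subseteq> triangle"
proof (induction n)
  case (Suc n)
  have "cylmap r d x (Suc n) ` triangle = cylmap r d x n ` (ph (x n) ` triangle)" by (auto simp: image_comp)
  also have "\<dots> \<subseteq> cylmap r d x n ` triangle" using ph_tri[OF words_in[OF Suc.prems]] by auto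
  finally show ?case using Suc by auto
qed simp

lemma tri_closed: "closed triangle" using tri_compact compact_imp_closed by blast

lemma K_tri: "K \<subseteq> triangle"
proof
  fix p assume p: "p \<in> K"
  show "p \<in> triangle"
  proof (rule ccontr)
    assume np: "p \<notin> triangle"
    obtain e where e: "e > 0" "\<forall>y\<in>triangle. e \<le> dist p y"
      using separate_point_closed[OF tri_closed np] by blast
    obtain x qs where x: "x \<in> words N" and h: "\<forall>n. qs n \<in> K \<and> p = cylmap r d x n (qs n)"
      using K_path[OF p] by blast
    obtain n where n: "rmx ^ n * (2 * B) < e" using small_pow e by blast
    have o: "cylmap r d x n (omega 0) \<in> triangle" using cyl_tri[OF x, of n] omega_tri[of 0] by auto
    have hp: "p = cylmap r d x n (qs n)" using h by blast
    have "p - cylmap r d x n (omega 0) = of_real (rat r x n) * (qs n - omega 0)"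
      unfolding hp by (rule cyl_diff)
    then have "dist p (cylmap r d x n (omega 0)) = rat r x n * cmod (qs n)"
      using abs_of_pos[OF rat_bd(3)[OF x, of n]] by (simp add: dist_norm norm_mult omega_def)
    also have "\<dots> \<le> rmx ^ n * (2 * B)"
      using rat_bd[OF x, of n] B(2)[of "qs n"] h B(1) by (intro mult_mono) auto
    finally have "dist p (cylmap r d x n (omega 0)) < e" using n by linarith
    moreover have "e \<le> dist p (cylmap r d x n (omega 0))" using e(2) o by blast
    ultimately show False by linarith
  qed
qed

lemma fix_vert: assumes z: "z \<in> triangle" and j: "j \<in> {1..N}" and v: "v < 3" and e: "ph j z = omega v"
  shows "z = omega v \<and> ph j (omega v) = omega v"
proof -
  let ?P = "ph j (omega v)"
  have P: "?P \<in> triangle" using ph_tri[OF j] omega_tri[OF v] by auto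
  have "lam v (omega v) - lam v ?P = lin v (ph j z - ?P)" using e by (simp add: lin_diff)
  also have "\<dots> = r j * (lam v z - lam v (omega v))" by (simp add: ph_diff lin_scale lin_diff)
  finally have eq: "1 - lam v ?P = r j * (lam v z - 1)" using lam_omega[OF v v] by simp
  have "lam v ?P \<le> 1" "lam v z \<le> 1" using lam_le1 P z v by auto
  moreover have "r j > 0" using r_bd[OF j] by simp
  ultimately have "r j * (lam v z - 1) \<le> 0" by (intro mult_nonneg_nonpos) auto
  then have "lam v ?P = 1" "r j * (lam v z - 1) = 0" using eq \<open>lam v ?P \<le> 1\<close> by linarith+
  then have "lam v z = 1" "lam v ?P = 1" using \<open>r j > 0\<close> by auto
  then show ?thesis using lam_one z P v by blast
qed

lemma vert_uniq: assumes i: "i \<in> {1..N}" and j: "j \<in> {1..N}" and v: "v < 3"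
  and e: "ph i (omega v) = ph j (omega v)" shows "i = j"
proof (rule ccontr)
  assume ij: "i \<noteq> j"
  define u :: nat where "u = (if v = 0 then 1 else 0)"
  have u: "u < 3" "u \<noteq> v" by (auto simp: u_def)
  define m where "m = min (r i) (r j) / 2"
  have ri: "0 < r i" "r i < 1" and rj: "0 < r j" "r j < 1" using r_bd i j by auto
  have m: "0 < m" "m < r i" "m \<le> r i / 2" "m \<le> r j / 2" using ri rj by (auto simp: m_def)
  let ?p = "ph i (omega v) + of_real m * (omega u - omega v)"
  have inimg: "?p \<in> ph k ` triangle" if k: "k \<in> {1..N}" "ph k (omega v) = ph i (omega v)" "m \<le> r k / 2" for k
  proof -
    have rk: "0 < r k" "r k < 1" using r_bd k by auto
    define t where "t = m / r k"
    have t: "0 \<le> t" "t \<le> 1" using m(1) rk(1) k(3) by (auto simp: t_def pos_divide_le_eq)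
    have zt: "omega v + of_real t * (omega u - omega v) = (1 - t) *\<^sub>R omega v + t *\<^sub>R omega u"
      by (simp add: scaleR_conv_of_real algebra_simps)
    have "(1 - t) *\<^sub>R omega v + t *\<^sub>R omega u \<in> triangle"
      using t omega_tri[OF v] omega_tri[OF u(1)] tri_convex by (intro convexD) auto
    then have zin: "omega v + of_real t * (omega u - omega v) \<in> triangle" using zt by simp
    have "ph k (omega v + of_real t * (omega u - omega v)) - ph k (omega v)
          = of_real (r k * t) * (omega u - omega v)" by (simp add: ph_diff)
    also have "r k * t = m" using rk by (simp add: t_def)
    finally have "ph k (omega v + of_real t * (omega u - omega v)) = ?p" using k by (simp add: algebra_simps)
    then show ?thesis using zin by (metis image_eqI)
  qed
  have "?p \<in> ph i ` triangle \<inter> ph j ` triangle" using inimg[OF i _ m(3)] inimg[OF j _ m(4)] e by auto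
  then have "?p \<in> ph i ` {omega 0, omega 1, omega 2}" using ph_int[OF i j ij] by blast
  then have "\<exists>w\<in>{0,1,2::nat}. ?p = ph i (omega w)" by auto
  then obtain w where w0: "w \<in> {0,1,2}" "?p = ph i (omega w)" by blast
  then have w: "w < 3" "?p = ph i (omega w)" by auto
  then have "ph i (omega w) - ph i (omega v) = of_real m * (omega u - omega v)"
    by (metis add_diff_cancel_left')
  then have "of_real (r i) * (omega w - omega v) = of_real m * (omega u - omega v)" by (simp add: ph_diff)
  then have "lin u (of_real (r i) * (omega w - omega v)) = lin u (of_real m * (omega u - omega v))" by simp
  then have "r i * (lam u (omega w) - lam u (omega v)) = m * (lam u (omega u) - lam u (omega v))"
    by (simp add: lin_scale lin_diff)
  then have "r i * lam u (omega w) = m" using lam_omega[OF v u(1)] lam_omega[OF u(1) u(1)] u by simp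
  then show False using lam_omega[OF w(1) u(1)] m by (auto split: if_splits)
qed

lemma fixidx: assumes "omega v \<in> K" "v < 3" shows "\<exists>!j. j \<in> {1..N} \<and> ph j (omega v) = omega v"
proof -
  obtain j z where jz: "j \<in> {1..N}" "z \<in> K" "omega v = ph j z" using assms(1) K_eq by blast
  then have "ph j (omega v) = omega v" using fix_vert[of z j v] K_tri assms by auto
  then show ?thesis using jz vert_uniq assms by metis
qed

lemma letter_eq: assumes "omega v \<in> K" "v < 3" "j \<in> {1..N}"
  shows "letter N r d K v = int j \<longleftrightarrow> ph j (omega v) = omega v"
proof -
  let ?J = "THE j. j \<in> {1..N} \<and> ph j (omega v) = omega v"
  have J: "?J \<in> {1..N} \<and> ph ?J (omega v) = omega v" using theI'[OF fixidx[OF assms(1,2)]] .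
  have l: "letter N r d K v = int ?J" using assms by (simp add: letter_def)
  show ?thesis
  proof
    assume "letter N r d K v = int j" then show "ph j (omega v) = omega v" using l J by simp
  next
    assume "ph j (omega v) = omega v"
    then have "j = ?J" using fixidx[OF assms(1,2)] J assms(3) by blast
    then show "letter N r d K v = int j" using l by simp
  qed
qed

lemma letter_K: "letter N r d K v \<in> int ` {1..N} \<Longrightarrow> omega v \<in> K"
  by (rule ccontr) (auto simp: letter_def)

lemma letter_in: assumes "omega v \<in> K" "v < 3" shows "letter N r d K v \<in> int ` {1..N}"
proof -
  obtain j where "j \<in> {1..N}" "ph j (omega v) = omega v" using fixidx[OF assms] by blast
  then show ?thesis using letter_eq[OF assms] by blast
qed

lemma notin: assumes "omega v \<in> K" "v < 3" "w \<in> {1..N}" "letter N r d K v \<noteq> int w"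
  shows "omega v \<notin> ph w ` K"
proof
  assume "omega v \<in> ph w ` K"
  then obtain z where "z \<in> K" "omega v = ph w z" by blast
  then have "ph w (omega v) = omega v" using fix_vert[of z w v] K_tri assms by auto
  then show False using letter_eq[OF assms(1-3)] assms(4) by simp
qed

definition cnd :: "nat \<Rightarrow> nat \<Rightarrow> nat \<Rightarrow> nat \<Rightarrow> bool" where
  "cnd i j a b \<longleftrightarrow> a \<in> {0,1,2} \<and> b \<in> {0,1,2} \<and> a \<noteq> b \<and>
      letter N r d K a \<in> int ` {1..N} \<and> letter N r d K b \<in> int ` {1..N} \<and>
      ph i (omega b) = ph j (omega a)"

lemma meet: assumes i: "i \<in> {1..N}" and j: "j \<in> {1..N}" and ij: "i \<noteq> j"
  and p: "p \<in> ph i ` K" "p \<in> ph j ` K" shows "\<exists>a b. cnd i j a b"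
proof -
  obtain z1 z2 where z: "z1 \<in> K" "z2 \<in> K" "p = ph i z1" "p = ph j z2" using p by blast
  then have "p \<in> ph i ` triangle \<inter> ph j ` triangle" using K_tri by blast
  then have "p \<in> ph i ` {omega 0, omega 1, omega 2} \<inter> ph j ` {omega 0, omega 1, omega 2}"
    using ph_int[OF i j ij] by blast
  then have "\<exists>b\<in>{0,1,2::nat}. p = ph i (omega b)" "\<exists>a\<in>{0,1,2::nat}. p = ph j (omega a)" by auto
  then obtain a b where ab: "a \<in> {0,1,2}" "b \<in> {0,1,2}" "p = ph i (omega b)" "p = ph j (omega a)"
    by blast
  have "z1 = omega b" "z2 = omega a" using ph_inj[OF i] ph_inj[OF j] z ab by metis+
  then have K: "omega a \<in> K" "omega b \<in> K" using z by auto
  have "a \<noteq> b"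
  proof
    assume "a = b"
    then have "ph i (omega a) = ph j (omega a)" using ab by simp
    moreover have "a < 3" using ab(1) by auto
    ultimately show False using vert_uniq[OF i j] ij by blast
  qed
  then have "cnd i j a b" unfolding cnd_def using ab K letter_in by auto
  then show ?thesis by blast
qed

end


context gk begin

abbreviation "it \<equiv> itin N r d K"

definition hascnd where "hascnd i j \<longleftrightarrow> (\<exists>a b. cnd i j a b)"

lemma delta_Id: "delta N r d K Id (i, j) = (if i = j then Id else if hascnd i j
    then (case (SOME (a, b). cnd i j a b) of (a, b) \<Rightarrow> S a b) else Exit)"
proof -
  have c: "cnd i j = (\<lambda>a b. a \<in> {0,1,2} \<and> b \<in> {0,1,2} \<and> a \<noteq> b \<and>
      letter N r d K a \<in> int ` {1..N} \<and> letter N r d K b \<in> int ` {1..N} \<and>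
      ph i (omega b) = ph j (omega a))" by (intro ext) (simp add: cnd_def)
  show ?thesis unfolding c hascnd_def by (simp add: delta_def)
qed

lemma delta_S: "delta N r d K (S a b) (i, j) =
    (if int i = letter N r d K b \<and> int j = letter N r d K a then S a b else Exit)"
  by (simp add: delta_def)

lemma delta_Exit: "delta N r d K Exit ij = Exit"
  by (simp add: delta_def split: prod.splits)

lemma it_Suc: "it x y (Suc n) = (if it x y n = Exit then Exit else delta N r d K (it x y n) (x n, y n))"
  by simp

lemma itin_inv: assumes x: "x \<in> words N" and y: "y \<in> words N"
  shows "(it x y n = Id \<longrightarrow> (\<forall>l<n. x l = y l)) \<and>
   (\<forall>a b. it x y n = S a b \<longrightarrow> a < 3 \<and> b < 3 \<and> a \<noteq> b \<and> omega a \<in> K \<and> omega b \<in> K \<and>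
        cylmap r d x n (omega b) = cylmap r d y n (omega a))"
proof (induction n)
  case 0 then show ?case by simp
next
  case (Suc n)
  have xn: "x n \<in> {1..N}" and yn: "y n \<in> {1..N}" using words_in x y by auto
  show ?case
  proof (cases "it x y n")
    case Id
    have pre: "\<forall>l<n. x l = y l" using Suc Id by simp
    then have cy: "cylmap r d x n = cylmap r d y n" by (rule cyl_agree)
    show ?thesis
    proof (cases "x n = y n")
      case True
      then have "it x y (Suc n) = Id" using Id by (simp add: delta_Id)
      moreover have "\<forall>l<Suc n. x l = y l" using pre True less_Suc_eq by auto
      ultimately show ?thesis by simp
    next
      case False
      show ?thesis
      proof (cases "hascnd (x n) (y n)")
        case True
        obtain a0 b0 where ab0: "(SOME (a, b). cnd (x n) (y n) a b) = (a0, b0)" by fastforce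
        have "\<exists>p. (\<lambda>(a, b). cnd (x n) (y n) a b) p" using True by (auto simp: hascnd_def)
        from someI_ex[OF this] have c: "cnd (x n) (y n) a0 b0" using ab0 by simp
        have st: "it x y (Suc n) = S a0 b0" using Id False True ab0 by (simp add: delta_Id)
        have "cylmap r d x (Suc n) (omega b0) = cylmap r d x n (ph (x n) (omega b0))" by simp
        also have "\<dots> = cylmap r d y n (ph (y n) (omega a0))" using c cy by (simp add: cnd_def)
        also have "\<dots> = cylmap r d y (Suc n) (omega a0)" by simp
        finally have e: "cylmap r d x (Suc n) (omega b0) = cylmap r d y (Suc n) (omega a0)" .
        have "a0 < 3" "b0 < 3" "a0 \<noteq> b0" "omega a0 \<in> K" "omega b0 \<in> K"
          using c letter_K unfolding cnd_def by auto
        then show ?thesis using st e by simp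
      next
        case False
        then show ?thesis using Id \<open>x n \<noteq> y n\<close> by (simp add: delta_Id)
      qed
    qed
  next
    case (S a b)
    have inv: "a < 3" "b < 3" "a \<noteq> b" "omega a \<in> K" "omega b \<in> K"
      "cylmap r d x n (omega b) = cylmap r d y n (omega a)" using Suc S by auto
    show ?thesis
    proof (cases "int (x n) = letter N r d K b \<and> int (y n) = letter N r d K a")
      case True
      then have st: "it x y (Suc n) = S a b" using S by (simp add: delta_S)
      have f1: "ph (x n) (omega b) = omega b" using letter_eq[OF inv(5) inv(2) xn] True by simp
      have f2: "ph (y n) (omega a) = omega a" using letter_eq[OF inv(4) inv(1) yn] True by simp
      have "cylmap r d x (Suc n) (omega b) = cylmap r d y (Suc n) (omega a)"
        using f1 f2 inv(6) by simp
      then show ?thesis using st inv by simp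
    next
      case False
      then show ?thesis using S by (auto simp: delta_S)
    qed
  next
    case Exit
    then show ?thesis by simp
  qed
qed

lemma exit_Id: "it x y n = Id \<Longrightarrow> it x y (Suc n) = Exit \<Longrightarrow> x n \<noteq> y n \<and> \<not> hascnd (x n) (y n)"
  by (auto simp: delta_Id split: if_splits prod.splits)

lemma exit_S: "it x y n = S a b \<Longrightarrow> it x y (Suc n) = Exit \<Longrightarrow>
   \<not> (int (x n) = letter N r d K b \<and> int (y n) = letter N r d K a)"
  by (auto simp: delta_S)

lemma exit_mono: assumes "it x y k = Exit" "k \<le> m" shows "it x y m = Exit"
  using assms(2)
proof (induction m rule: dec_induct)
  case base then show ?case using assms(1) by simp
next
  case (step m) then show ?case by simp
qed

lemma surv_cases:
  "((\<forall>k. it x y k \<noteq> Exit) \<and> surv_time N r d K x y = \<infinity>) \<or>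
   (\<exists>n. it x y n \<noteq> Exit \<and> it x y (Suc n) = Exit \<and> surv_time N r d K x y = enat n)"
proof (cases "\<forall>k. it x y k \<noteq> Exit")
  case True
  then have "{k. it x y k \<noteq> Exit} = UNIV" by auto
  moreover have "infinite (enat ` UNIV)" by (meson enat.inject finite_imageD infinite_UNIV_nat inj_onI)
  ultimately have "surv_time N r d K x y = \<infinity>" by (simp add: surv_time_def Sup_enat_def)
  then show ?thesis using True by simp
next
  case False
  then obtain k where k: "it x y k = Exit" by auto
  define k0 where "k0 = (LEAST k. it x y k = Exit)"
  have k0: "it x y k0 = Exit" unfolding k0_def using k by (rule LeastI)
  have k0m: "m < k0 \<Longrightarrow> it x y m \<noteq> Exit" for m unfolding k0_def using not_less_Least by blast
  have "k0 \<noteq> 0" using k0 by (cases k0) auto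
  then obtain n where n: "k0 = Suc n" using not0_implies_Suc by blast
  have set: "{k. it x y k \<noteq> Exit} = {..n}"
  proof (intro set_eqI iffI)
    fix m assume "m \<in> {k. it x y k \<noteq> Exit}"
    then have "\<not> k0 \<le> m" using exit_mono[OF k0] by auto
    then show "m \<in> {..n}" using n by auto
  next
    fix m assume "m \<in> {..n}" then show "m \<in> {k. it x y k \<noteq> Exit}" using k0m n by auto
  qed
  have "Max (enat ` {..n}) = enat n" by (rule Max_eqI) auto
  then have "surv_time N r d K x y = enat n" unfolding surv_time_def set Sup_enat_def by simp
  moreover have "it x y n \<noteq> Exit" "it x y (Suc n) = Exit" using k0m n k0 by auto
  ultimately show ?thesis by blast
qed

lemma upper: assumes x: "x \<in> words N" and y: "y \<in> words N" and ne: "it x y n \<noteq> Exit"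
  shows "cmod (coding r d K x - coding r d K y) \<le> rmx ^ n * (4 * B)"
proof -
  obtain p1 where p1: "p1 \<in> K" "coding r d K x = cylmap r d x n p1" using coding(2)[OF x, of n] by blast
  obtain p2 where p2: "p2 \<in> K" "coding r d K y = cylmap r d y n p2" using coding(2)[OF y, of n] by blast
  note inv = itin_inv[OF x y, of n]
  show ?thesis
  proof (cases "it x y n")
    case Id
    then have "cylmap r d x n = cylmap r d y n" using inv cyl_agree by simp
    then have "cmod (coding r d K x - coding r d K y) \<le> rmx ^ n * (2 * B)"
      using p1 p2 cyl_small[OF y p1(1) p2(1), of n] by simp
    also have "\<dots> \<le> rmx ^ n * (4 * B)" using B(1) rmn_bd by (intro mult_left_mono) auto
    finally show ?thesis .
  next
    case (S a b)
    then have ab: "omega a \<in> K" "omega b \<in> K" "cylmap r d x n (omega b) = cylmap r d y n (omega a)"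
      using inv by auto
    have "coding r d K x - coding r d K y = (cylmap r d x n p1 - cylmap r d x n (omega b))
         + (cylmap r d y n (omega a) - cylmap r d y n p2)" using p1 p2 ab(3) by simp
    then have "cmod (coding r d K x - coding r d K y) \<le> cmod (cylmap r d x n p1 - cylmap r d x n (omega b))
         + cmod (cylmap r d y n (omega a) - cylmap r d y n p2)" using norm_triangle_ineq by metis
    also have "\<dots> \<le> rmx ^ n * (2 * B) + rmx ^ n * (2 * B)"
      using cyl_small[OF x p1(1) ab(2)] cyl_small[OF y ab(1) p2(1)] by (intro add_mono)
    finally show ?thesis by (simp add: algebra_simps)
  next
    case Exit then show ?thesis using ne by simp
  qed
qed

lemma lam_cont: "continuous_on A (lam v)"
proof -
  have "lam v = (\<lambda>z. if v = 0 then 1 - Re z - Im z / sqrt 3 else if v = 1 then Re z - Im z / sqrt 3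
              else 2 * Im z / sqrt 3)" by (auto simp: lam_def)
  then show ?thesis by (cases "v = 0"; cases "v = 1") (simp_all add: continuous_intros)
qed

lemma ph_cont: "continuous_on A (ph j)"
  unfolding phi_def by (intro continuous_intros)

lemma cpt_img: "compact (ph j ` K)"
  by (intro compact_continuous_image ph_cont K_cpt)

lemma delta_ex: "\<exists>e>0. \<forall>ij\<in>{1..N} \<times> {1..N}. ph (fst ij) ` K \<inter> ph (snd ij) ` K = {} \<longrightarrow>
     (\<forall>p\<in>ph (fst ij) ` K. \<forall>q\<in>ph (snd ij) ` K. e \<le> cmod (p - q))"
proof (rule fin_min)
  show "finite ({1..N} \<times> {1..N})" by simp
next
  show "\<forall>ij\<in>{1..N} \<times> {1..N}. \<exists>e>0. ph (fst ij) ` K \<inter> ph (snd ij) ` K = {} \<longrightarrow>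
     (\<forall>p\<in>ph (fst ij) ` K. \<forall>q\<in>ph (snd ij) ` K. e \<le> cmod (p - q))"
  proof
    fix ij :: "nat \<times> nat"
    show "\<exists>e>0. ph (fst ij) ` K \<inter> ph (snd ij) ` K = {} \<longrightarrow>
     (\<forall>p\<in>ph (fst ij) ` K. \<forall>q\<in>ph (snd ij) ` K. e \<le> cmod (p - q))"
    proof (cases "ph (fst ij) ` K \<inter> ph (snd ij) ` K = {}")
      case True
      from separate_compact_closed[OF cpt_img compact_imp_closed[OF cpt_img] True]
      show ?thesis by (auto simp: dist_norm)
    next
      case False then show ?thesis using zero_less_one by blast
    qed
  qed
qed (auto intro: order_trans)

lemma eta_ex: "\<exists>e>0. \<forall>vw\<in>{0..<3::nat} \<times> {1..N}. omega (fst vw) \<notin> ph (snd vw) ` K \<longrightarrow>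
     (\<forall>q\<in>ph (snd vw) ` K. e \<le> 1 - lam (fst vw) q)"
proof (rule fin_min)
  show "finite ({0..<3::nat} \<times> {1..N})" by simp
next
  show "\<forall>vw\<in>{0..<3::nat} \<times> {1..N}. \<exists>e>0. omega (fst vw) \<notin> ph (snd vw) ` K \<longrightarrow>
     (\<forall>q\<in>ph (snd vw) ` K. e \<le> 1 - lam (fst vw) q)"
  proof
    fix vw :: "nat \<times> nat" assume vw: "vw \<in> {0..<3::nat} \<times> {1..N}"
    obtain v w where vw': "vw = (v, w)" by fastforce
    have v: "v < 3" and w: "w \<in> {1..N}" using vw vw' by auto
    show "\<exists>e>0. omega (fst vw) \<notin> ph (snd vw) ` K \<longrightarrow>
     (\<forall>q\<in>ph (snd vw) ` K. e \<le> 1 - lam (fst vw) q)"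
    proof (cases "omega v \<in> ph w ` K")
      case False
      have "ph w ` K \<noteq> {}" using K_ne by auto
      moreover have cont: "continuous_on (ph w ` K) (\<lambda>q. 1 - lam v q)"
        by (intro continuous_on_diff continuous_on_const lam_cont)
      ultimately obtain q0 where q0: "q0 \<in> ph w ` K" "\<forall>q\<in>ph w ` K. 1 - lam v q0 \<le> 1 - lam v q"
        using continuous_attains_inf[OF cpt_img] by blast
      have q0t: "q0 \<in> triangle" using q0(1) ph_K[OF w] K_tri by auto
      have "lam v q0 \<noteq> 1"
      proof
        assume "lam v q0 = 1"
        then have "q0 = omega v" by (rule lam_one[OF q0t v])
        then show False using q0(1) False by simp
      qed
      then have pos: "1 - lam v q0 > 0" using lam_le1[OF q0t v] by auto
      have "\<forall>q\<in>ph w ` K. 1 - lam v q0 \<le> 1 - lam v q" using q0(2) .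
      then show ?thesis using pos vw' by (intro exI[of _ "1 - lam v q0"]) simp
    next
      case True then show ?thesis using vw' by (intro exI[of _ "1::real"]) simp
    qed
  qed
qed (auto intro: order_trans)

definition dl where "dl = (SOME e. e > 0 \<and> (\<forall>ij\<in>{1..N} \<times> {1..N}. ph (fst ij) ` K \<inter> ph (snd ij) ` K = {} \<longrightarrow>
     (\<forall>p\<in>ph (fst ij) ` K. \<forall>q\<in>ph (snd ij) ` K. e \<le> cmod (p - q))))"
definition et where "et = (SOME e. e > 0 \<and> (\<forall>vw\<in>{0..<3::nat} \<times> {1..N}. omega (fst vw) \<notin> ph (snd vw) ` K \<longrightarrow>
     (\<forall>q\<in>ph (snd vw) ` K. e \<le> 1 - lam (fst vw) q)))"

lemma dl: "dl > 0" "i \<in> {1..N} \<Longrightarrow> j \<in> {1..N} \<Longrightarrow> ph i ` K \<inter> ph j ` K = {} \<Longrightarrow>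
   p \<in> ph i ` K \<Longrightarrow> q \<in> ph j ` K \<Longrightarrow> dl \<le> cmod (p - q)"
  using someI_ex[OF delta_ex] unfolding dl_def[symmetric] by auto

lemma et: "et > 0" "v < 3 \<Longrightarrow> w \<in> {1..N} \<Longrightarrow> omega v \<notin> ph w ` K \<Longrightarrow>
   q \<in> ph w ` K \<Longrightarrow> et \<le> 1 - lam v q"
  using someI_ex[OF eta_ex] unfolding et_def[symmetric] by auto

definition cc where "cc = min dl (et / 2)"

lemma cc_pos: "cc > 0" using dl(1) et(1) by (simp add: cc_def)

end


context gk begin

lemma lower: assumes x: "x \<in> words N" and y: "y \<in> words N"
  and ne: "it x y n \<noteq> Exit" and ex: "it x y (Suc n) = Exit"
  shows "cc * rmn ^ n \<le> cmod (coding r d K x - coding r d K y)"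
proof -
  have xn: "x n \<in> {1..N}" and yn: "y n \<in> {1..N}" using words_in x y by auto
  obtain p1 where p1: "p1 \<in> K" "coding r d K x = cylmap r d x (Suc n) p1" using coding(2)[OF x, of "Suc n"] by blast
  obtain p2 where p2: "p2 \<in> K" "coding r d K y = cylmap r d y (Suc n) p2" using coding(2)[OF y, of "Suc n"] by blast
  define q1 where "q1 = ph (x n) p1"
  define q2 where "q2 = ph (y n) p2"
  have cx: "coding r d K x = cylmap r d x n q1" using p1 by (simp add: q1_def)
  have cy: "coding r d K y = cylmap r d y n q2" using p2 by (simp add: q2_def)
  have q1K: "q1 \<in> ph (x n) ` K" and q2K: "q2 \<in> ph (y n) ` K" using p1 p2 by (auto simp: q1_def q2_def)
  have q1t: "q1 \<in> triangle" and q2t: "q2 \<in> triangle" using q1K q2K ph_K[OF xn] ph_K[OF yn] K_tri by auto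
  have rx: "rmn ^ n \<le> rat r x n" "0 < rat r x n" and ry: "rmn ^ n \<le> rat r y n" "0 < rat r y n"
    using rat_bd x y by auto
  have rp: "0 \<le> rmn ^ n" using rmn_bd(1) by simp
  note inv = itin_inv[OF x y, of n]
  show ?thesis
  proof (cases "it x y n")
    case Id
    then have ne2: "x n \<noteq> y n" "\<not> hascnd (x n) (y n)" using exit_Id ex by auto
    have disj: "ph (x n) ` K \<inter> ph (y n) ` K = {}"
    proof (rule ccontr)
      assume "ph (x n) ` K \<inter> ph (y n) ` K \<noteq> {}"
      then obtain p where "p \<in> ph (x n) ` K" "p \<in> ph (y n) ` K" by blast
      then have "hascnd (x n) (y n)" using meet[OF xn yn ne2(1)] by (auto simp: hascnd_def)
      then show False using ne2 by simp
    qed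
    have dq: "dl \<le> cmod (q1 - q2)" using dl(2)[OF xn yn disj q1K q2K] .
    have "cylmap r d x n = cylmap r d y n" using inv Id cyl_agree by simp
    then have "coding r d K x - coding r d K y = of_real (rat r x n) * (q1 - q2)"
      using cx cy cyl_diff by metis
    then have eq: "cmod (coding r d K x - coding r d K y) = rat r x n * cmod (q1 - q2)"
      using rx(2) by (simp add: norm_mult)
    have "cc * rmn ^ n \<le> dl * rmn ^ n" using rp by (intro mult_right_mono) (auto simp: cc_def)
    also have "\<dots> \<le> cmod (q1 - q2) * rat r x n" using dq rx rp dl(1) by (intro mult_mono) auto
    finally show ?thesis using eq by (simp add: mult.commute)
  next
    case (S a b)
    then have ab: "a < 3" "b < 3" "a \<noteq> b" "omega a \<in> K" "omega b \<in> K"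
      "cylmap r d x n (omega b) = cylmap r d y n (omega a)" using inv by auto
    have nl: "\<not> (int (x n) = letter N r d K b \<and> int (y n) = letter N r d K a)" using exit_S S ex by blast
    have "coding r d K x - coding r d K y = (cylmap r d x n q1 - cylmap r d x n (omega b))
         - (cylmap r d y n q2 - cylmap r d y n (omega a))" using cx cy ab(6) by simp
    then have diff: "coding r d K x - coding r d K y = of_real (rat r x n) * (q1 - omega b)
         - of_real (rat r y n) * (q2 - omega a)" by (simp only: cyl_diff)
    show ?thesis
    proof (cases "int (x n) = letter N r d K b")
      case False
      have "omega b \<notin> ph (x n) ` K" using notin[OF ab(5) ab(2) xn] False by simp
      then have e: "et \<le> 1 - lam b q1" using et(2)[OF ab(2) xn _ q1K] by simp
      have "rat r x n * (1 - lam b q1) \<le> 2 * cmod (coding r d K x - coding r d K y)"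
        unfolding diff using sep[OF ab(1,2,3) q1t q2t] rx ry by simp
      moreover have "rmn ^ n * et \<le> rat r x n * (1 - lam b q1)"
        using e rx rp et(1) by (intro mult_mono) auto
      moreover have "cc * rmn ^ n \<le> (et / 2) * rmn ^ n" using rp by (intro mult_right_mono) (auto simp: cc_def)
      ultimately show ?thesis by (simp add: algebra_simps)
    next
      case True
      then have F: "int (y n) \<noteq> letter N r d K a" using nl by simp
      have "omega a \<notin> ph (y n) ` K" using notin[OF ab(4) ab(1) yn] F by simp
      then have e: "et \<le> 1 - lam a q2" using et(2)[OF ab(1) yn _ q2K] by simp
      have "rat r y n * (1 - lam a q2) \<le> 2 * cmod (of_real (rat r y n) * (q2 - omega a) - of_real (rat r x n) * (q1 - omega b))"
        using sep[OF ab(2,1) ab(3)[symmetric] q2t q1t] rx ry by simp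
      also have "\<dots> = 2 * cmod (coding r d K x - coding r d K y)" unfolding diff by (simp add: norm_minus_commute)
      finally have "rat r y n * (1 - lam a q2) \<le> 2 * cmod (coding r d K x - coding r d K y)" .
      moreover have "rmn ^ n * et \<le> rat r y n * (1 - lam a q2)"
        using e ry rp et(1) by (intro mult_mono) auto
      moreover have "cc * rmn ^ n \<le> (et / 2) * rmn ^ n" using rp by (intro mult_right_mono) (auto simp: cc_def)
      ultimately show ?thesis by (simp add: algebra_simps)
    qed
  next
    case Exit then show ?thesis using ne by simp
  qed
qed

lemma same_iff: assumes x: "x \<in> words N" and y: "y \<in> words N"
  shows "coding r d K x = coding r d K y \<longleftrightarrow> (\<forall>k. it x y k \<noteq> Exit)"
proof
  assume eq: "coding r d K x = coding r d K y"
  show "\<forall>k. it x y k \<noteq> Exit"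
  proof (rule ccontr)
    assume "\<not> (\<forall>k. it x y k \<noteq> Exit)"
    then obtain n where n: "it x y n \<noteq> Exit" "it x y (Suc n) = Exit" using surv_cases[of x y] by blast
    have "cc * rmn ^ n \<le> 0" using lower[OF x y n] eq by simp
    moreover have "cc * rmn ^ n > 0" using cc_pos rmn_bd(1) by simp
    ultimately show False by simp
  qed
next
  assume all: "\<forall>k. it x y k \<noteq> Exit"
  let ?u = "cmod (coding r d K x - coding r d K y)"
  show "coding r d K x = coding r d K y"
  proof (rule ccontr)
    assume "coding r d K x \<noteq> coding r d K y"
    then have "?u > 0" by simp
    then obtain n where n: "rmx ^ n * (2 * B) < ?u / 2" using small_pow[of "?u / 2"] by auto
    have "?u \<le> rmx ^ n * (4 * B)" using upper[OF x y] all by blast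
    then show False using n by simp
  qed
qed

lemma rho_nonneg: "0 < \<xi> \<Longrightarrow> 0 \<le> rho N r d K \<xi> x y"
  by (auto simp: rho_def split: enat.splits)

lemma rho_zero_iff: assumes "0 < \<xi>" shows "rho N r d K \<xi> x y = 0 \<longleftrightarrow> (\<forall>k. it x y k \<noteq> Exit)"
proof (cases "surv_time N r d K x y")
  case (enat n)
  from surv_cases[of x y] have "\<exists>m. it x y m \<noteq> Exit \<and> it x y (Suc m) = Exit"
  proof (elim disjE)
    assume "(\<forall>k. it x y k \<noteq> Exit) \<and> surv_time N r d K x y = \<infinity>"
    then show ?thesis using enat by (simp del: itin.simps)
  next
    assume "\<exists>n. it x y n \<noteq> Exit \<and> it x y (Suc n) = Exit \<and> surv_time N r d K x y = enat n"
    then show ?thesis by blast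
  qed
  then have "\<not> (\<forall>k. it x y k \<noteq> Exit)" by blast
  moreover have "rho N r d K \<xi> x y \<noteq> 0" using enat assms by (simp add: rho_def del: itin.simps)
  ultimately show ?thesis by blast
next
  case infinity
  from surv_cases[of x y] have "\<forall>k. it x y k \<noteq> Exit"
  proof (elim disjE)
    assume "(\<forall>k. it x y k \<noteq> Exit) \<and> surv_time N r d K x y = \<infinity>"
    then show ?thesis by blast
  next
    assume "\<exists>n. it x y n \<noteq> Exit \<and> it x y (Suc n) = Exit \<and> surv_time N r d K x y = enat n"
    then show ?thesis using infinity by (simp del: itin.simps)
  qed
  moreover have "rho N r d K \<xi> x y = 0" using infinity by (simp add: rho_def del: itin.simps)
  ultimately show ?thesis by blast
qed

lemma pair_bounds:
  assumes s: "s > 0" "rmn powr (s * s) = rmx" and x: "x \<in> words N" and y: "y \<in> words N"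
  shows "cmod (coding r d K x - coding r d K y) \<le> (4 * B) * rho N r d K (rmn powr s) x y powr s"
    "cc * rho N r d K (rmn powr s) x y powr (1 / s) \<le> cmod (coding r d K x - coding r d K y)"
proof -
  let ?xi = "rmn powr s"
  have xi: "?xi > 0" using rmn_bd(1) by simp
  have "((\<forall>k. it x y k \<noteq> Exit) \<and> surv_time N r d K x y = \<infinity>) \<or>
   (\<exists>n. it x y n \<noteq> Exit \<and> it x y (Suc n) = Exit \<and> surv_time N r d K x y = enat n)"
    by (rule surv_cases)
  then have "cmod (coding r d K x - coding r d K y) \<le> (4 * B) * rho N r d K ?xi x y powr s \<and>
    cc * rho N r d K ?xi x y powr (1 / s) \<le> cmod (coding r d K x - coding r d K y)"
  proof
    assume a: "(\<forall>k. it x y k \<noteq> Exit) \<and> surv_time N r d K x y = \<infinity>"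
    then have "coding r d K x = coding r d K y" using same_iff[OF x y] by blast
    moreover have "rho N r d K ?xi x y = 0" using a by (simp add: rho_def del: itin.simps)
    ultimately show ?thesis by (simp del: itin.simps)
  next
    assume "\<exists>n. it x y n \<noteq> Exit \<and> it x y (Suc n) = Exit \<and> surv_time N r d K x y = enat n"
    then obtain n where n: "it x y n \<noteq> Exit" "it x y (Suc n) = Exit" "surv_time N r d K x y = enat n"
      by blast
    have rho: "rho N r d K ?xi x y = ?xi ^ n" using n(3) by (simp add: rho_def del: itin.simps)
    have p: "?xi ^ n = rmn powr (s * real n)"
      using powr_realpow[OF xi, of n] by (simp add: powr_powr)
    have p1: "(?xi ^ n) powr s = rmx ^ n"
    proof -
      have "(?xi ^ n) powr s = rmn powr ((s * s) * real n)" unfolding p powr_powr by (simp add: ac_simps)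
      also have "\<dots> = (rmn powr (s * s)) powr real n" by (simp add: powr_powr)
      also have "\<dots> = rmx ^ n" using s(2) powr_realpow[of rmx n] rmn_bd by simp
      finally show ?thesis .
    qed
    have p2: "(?xi ^ n) powr (1 / s) = rmn ^ n"
    proof -
      have "(?xi ^ n) powr (1 / s) = rmn powr (real n)" unfolding p powr_powr using s(1) by simp
      also have "\<dots> = rmn ^ n" using powr_realpow[of rmn n] rmn_bd by simp
      finally show ?thesis .
    qed
    show ?thesis using upper[OF x y n(1)] lower[OF x y n(1,2)] rho p1 p2 by (simp add: mult.commute del: itin.simps)
  qed
  then show "cmod (coding r d K x - coding r d K y) \<le> (4 * B) * rho N r d K ?xi x y powr s"
    "cc * rho N r d K ?xi x y powr (1 / s) \<le> cmod (coding r d K x - coding r d K y)" by auto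
qed

end


context gk begin

lemma main_loc:
  assumes s: "s > 0" "rmn powr (s * s) = rmx"
  shows "\<exists>f. (\<forall>x\<in>words N. f (eqclass N r d K (rmn powr s) x) = coding r d K x)
           \<and> bij_betw f (quot N r d K (rmn powr s)) K
           \<and> (\<exists>C>0. \<forall>a\<in>quot N r d K (rmn powr s). \<forall>b\<in>quot N r d K (rmn powr s).
                 (1 / C) * rho_tilde N r d K (rmn powr s) a b powr (1 / s) \<le> cmod (f a - f b)
               \<and> cmod (f a - f b) \<le> C * rho_tilde N r d K (rmn powr s) a b powr s)"
proof -
  define xi where "xi = rmn powr s"
  have xi: "xi > 0" using rmn_bd(1) by (simp add: xi_def)
  have ec: "eqclass N r d K xi x = {y \<in> words N. coding r d K y = coding r d K x}" if x: "x \<in> words N" for x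
  proof -
    have "rho N r d K xi x y = 0 \<longleftrightarrow> coding r d K y = coding r d K x" if y: "y \<in> words N" for y
      using rho_zero_iff[OF xi, of x y] same_iff[OF x y] by (auto simp del: itin.simps)
    then show ?thesis unfolding eqclass_def by blast
  qed
  define f where "f A = coding r d K (SOME x. x \<in> A)" for A
  have xin: "x \<in> eqclass N r d K xi x" if "x \<in> words N" for x using ec that by simp
  have fx: "f (eqclass N r d K xi x) = coding r d K x" if x: "x \<in> words N" for x
  proof -
    have "(SOME y. y \<in> eqclass N r d K xi x) \<in> eqclass N r d K xi x" by (rule someI[of "\<lambda>y. y \<in> eqclass N r d K xi x", OF xin[OF x]])
    then show ?thesis unfolding f_def using ec[OF x] by simp
  qed
  have cK: "coding r d K x \<in> K" if x: "x \<in> words N" for x using coding(2)[OF x, of 0] by simp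
  have bij: "bij_betw f (quot N r d K xi) K"
    unfolding bij_betw_def
  proof
    show "inj_on f (quot N r d K xi)"
    proof (rule inj_onI)
      fix A A' assume A: "A \<in> quot N r d K xi" and A': "A' \<in> quot N r d K xi" and e: "f A = f A'"
      obtain x where x: "x \<in> words N" "A = eqclass N r d K xi x" using A by (auto simp: quot_def)
      obtain y where y: "y \<in> words N" "A' = eqclass N r d K xi y" using A' by (auto simp: quot_def)
      have "coding r d K x = coding r d K y" using e fx x y by simp
      then show "A = A'" using ec x y by simp
    qed
  next
    show "f ` quot N r d K xi = K"
    proof
      show "f ` quot N r d K xi \<subseteq> K" using fx cK by (auto simp: quot_def)
    next
      show "K \<subseteq> f ` quot N r d K xi"
      proof
        fix p assume "p \<in> K"
        then obtain x where x: "x \<in> words N" "coding r d K x = p" using onto by blast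
        then have "p = f (eqclass N r d K xi x)" using fx by simp
        moreover have "eqclass N r d K xi x \<in> quot N r d K xi" using x by (simp add: quot_def)
        ultimately show "p \<in> f ` quot N r d K xi" by blast
      qed
    qed
  qed
  define C where "C = max (4 * B) (1 / cc)"
  have C: "C > 0" "4 * B \<le> C" "1 / C \<le> cc" using B(1) cc_pos
    by (auto simp: C_def max_def field_simps)
  have hold: "(1 / C) * rho_tilde N r d K xi a b powr (1 / s) \<le> cmod (f a - f b)
               \<and> cmod (f a - f b) \<le> C * rho_tilde N r d K xi a b powr s"
    if a: "a \<in> quot N r d K xi" and b: "b \<in> quot N r d K xi" for a b
  proof -
    obtain x where x: "x \<in> words N" "a = eqclass N r d K xi x" using a by (auto simp: quot_def)
    obtain y where y: "y \<in> words N" "b = eqclass N r d K xi y" using b by (auto simp: quot_def)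
    define u where "u = cmod (f a - f b)"
    have u: "u = cmod (coding r d K x - coding r d K y)" using fx x y by (simp add: u_def)
    define S where "S = {rho N r d K xi a' b' |a' b'. a' \<in> a \<and> b' \<in> b}"
    have rt: "rho_tilde N r d K xi a b = Inf S" by (simp add: rho_tilde_def S_def)
    have mem: "t \<in> S \<Longrightarrow> u \<le> (4 * B) * t powr s \<and> cc * t powr (1 / s) \<le> u \<and> 0 \<le> t" for t
    proof -
      assume "t \<in> S"
      then obtain a' b' where ab: "a' \<in> a" "b' \<in> b" "t = rho N r d K xi a' b'" by (auto simp: S_def)
      have a': "a' \<in> words N" "coding r d K a' = coding r d K x" using ab(1) x ec by auto
      have b': "b' \<in> words N" "coding r d K b' = coding r d K y" using ab(2) y ec by auto
      show ?thesis using pair_bounds[OF s a'(1) b'(1)] a'(2) b'(2) u ab(3) rho_nonneg[OF xi]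
        by (simp add: xi_def del: itin.simps)
    qed
    have xyS: "rho N r d K xi x y \<in> S" using xin x y by (auto simp: S_def)
    have bdd: "bdd_below S" by (rule bdd_belowI[of _ 0]) (use mem in blast)
    have Sne: "S \<noteq> {}" using xyS by blast
    have I0: "0 \<le> Inf S" using mem Sne by (intro cInf_greatest) auto
    have I1: "Inf S \<le> rho N r d K xi x y" using xyS bdd by (rule cInf_lower)
    have low: "(1 / C) * Inf S powr (1 / s) \<le> u"
    proof -
      have "(1 / C) * Inf S powr (1 / s) \<le> cc * rho N r d K xi x y powr (1 / s)"
        using C cc_pos I0 I1 s(1) by (intro mult_mono powr_mono2) auto
      also have "\<dots> \<le> u" using mem[OF xyS] by simp
      finally show ?thesis .
    qed
    have B4: "4 * B > 0" using B(1) by simp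
    have u0: "0 \<le> u" by (simp add: u_def)
    have "(u / (4 * B)) powr (1 / s) \<le> Inf S"
    proof (rule cInf_greatest[OF Sne])
      fix t assume t: "t \<in> S"
      then have "u / (4 * B) \<le> t powr s" using mem[OF t] B4 by (simp add: field_simps)
      then have "(u / (4 * B)) powr (1 / s) \<le> (t powr s) powr (1 / s)"
        using s(1) u0 B4 by (intro powr_mono2) auto
      also have "\<dots> = t" using s(1) mem[OF t] by (simp add: powr_powr powr_one)
      finally show "(u / (4 * B)) powr (1 / s) \<le> t" .
    qed
    then have "((u / (4 * B)) powr (1 / s)) powr s \<le> Inf S powr s"
      using s(1) by (intro powr_mono2) auto
    moreover have "((u / (4 * B)) powr (1 / s)) powr s = u / (4 * B)"
      using s(1) u0 B4 by (simp add: powr_powr powr_one)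
    ultimately have "u / (4 * B) \<le> Inf S powr s" by simp
    then have "u \<le> (4 * B) * Inf S powr s" using B4 by (simp add: field_simps)
    also have "\<dots> \<le> C * Inf S powr s" using C by (intro mult_right_mono) auto
    finally show ?thesis using low rt by (simp add: u_def)
  qed
  show ?thesis unfolding xi_def[symmetric]
    using fx bij hold C(1) by blast
qed

end


theorem theorem1p3:
  fixes N :: nat and r :: "nat \<Rightarrow> real" and d :: "nat \<Rightarrow> complex" and K :: "complex set"
  assumes gasket: "fractal_gasket N r d K"
  defines "rmin \<equiv> Min (r ` {1..N})"
      and "rmax \<equiv> Max (r ` {1..N})"
  defines "s \<equiv> sqrt (ln rmax / ln rmin)"
  defines "\<xi> \<equiv> rmin powr s"
  shows "\<exists>f. (\<forall>x\<in>words N. f (eqclass N r d K \<xi> x) = coding r d K x)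
           \<and> bij_betw f (quot N r d K \<xi>) K
           \<and> (\<exists>C>0. \<forall>a\<in>quot N r d K \<xi>. \<forall>b\<in>quot N r d K \<xi>.
                 (1 / C) * rho_tilde N r d K \<xi> a b powr (1 / s) \<le> cmod (f a - f b)
               \<and> cmod (f a - f b) \<le> C * rho_tilde N r d K \<xi> a b powr s)"
proof -
  interpret g: gk N r d K by (rule gk.intro) (rule gasket)
  have b: "0 < rmin" "rmax < 1" "rmin \<le> rmax" using g.rmn_bd unfolding rmin_def rmax_def by auto
  have bmin: "rmin < 1" using b by linarith
  have bmax: "0 < rmax" using b by linarith
  have lmin: "ln rmin < 0" using b(1) bmin by simp
  have lmax: "ln rmax < 0" using bmax b(2) by simp
  have q: "ln rmax / ln rmin > 0" using lmin lmax by (simp add: divide_neg_neg)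
  have spos: "s > 0" unfolding s_def using q by simp
  have ss: "s * s = ln rmax / ln rmin" unfolding s_def using q lmin lmax by (simp add: abs_of_neg)
  have "rmin powr (s * s) = exp (ln rmax / ln rmin * ln rmin)" using b(1) by (simp add: powr_def ss)
  also have "\<dots> = rmax" using lmin bmax by simp
  finally have pw: "rmin powr (s * s) = rmax" .
  show ?thesis using g.main_loc[OF spos pw[unfolded rmin_def rmax_def]] unfolding \<xi>_def rmin_def .
qed

end
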